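(* Let $3\le a<b$ be integers and for $z\in(0,1)$ let $$\tilde T(z)=\frac{\frac{z}{1-z}Z_0(z)+\ln(1-z)\,Z_1(z)}{a\,b\,(b-a)\,z^{a+b-2}},\qquad Z_j(z)=a(a-1)^j z^{a-1}-b(b-1)^jz^{b-1}.$$ (Wherever $h(z)\ne0$ and $z\neq z_r$, $\tilde T(z)=T(z,1/h(z))$ is the value of the threshold function at the critical point with $\alpha=1/h(z)$.) Then for all $z\in(0,z')$: $\tilde T'(z)>0\iff g(z)>0$; and for all $z\in(z',1)$: $\tilde T'(z)<0\iff g(z)>0$, where $z'=(a/b)^{1/(b-a)}$.
   Context: $T(z,\alpha)=\frac{-\ln(1-z)}{\alpha a z^{a-1}+(1-\alpha)bz^{b-1}}$. $f(z)=\frac{-\ln(1-z)(1-z)}{z}$, $g(z)=f(z)(b-1)(a-1)+\frac1{1-z}+2-b-a$, $h(z)=\frac{a z^{a-b}-b-f(z)(a(a-1)z^{a-b}-b(b-1))}{b((b-1)f(z)-1)}$; $z_r$ is the unique $z\in(0,1)$ with $f(z)=\frac1{b-1}$. *)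

theory Defs
  imports "HOL-Analysis.Analysis"
begin

definition fF :: "real \<Rightarrow> real" where
  "fF z = - ln (1 - z) * (1 - z) / z"

definition gF :: "nat \<Rightarrow> nat \<Rightarrow> real \<Rightarrow> real" where
  "gF a b z = fF z * (real b - 1) * (real a - 1) + 1 / (1 - z) + 2 - real b - real a"

definition Zj :: "nat \<Rightarrow> nat \<Rightarrow> nat \<Rightarrow> real \<Rightarrow> real" where
  "Zj a b j z = real a * (real a - 1) ^ j * z ^ (a - 1) - real b * (real b - 1) ^ j * z ^ (b - 1)"

definition Ttilde :: "nat \<Rightarrow> nat \<Rightarrow> real \<Rightarrow> real" where
  "Ttilde a b z =
     (z / (1 - z) * Zj a b 0 z + ln (1 - z) * Zj a b 1 z)
     / (real a * real b * (real b - real a) * z ^ (a + b - 2))"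

definition zprime :: "nat \<Rightarrow> nat \<Rightarrow> real" where
  "zprime a b = (real a / real b) powr (1 / (real b - real a))"

end

theory Submission
  imports Defs
begin

lemma Zj_deriv:
  fixes a b :: nat
  assumes "2 \<le> a" "2 \<le> b" "0 < z"
  shows "((\<lambda>z. Zj a b j z) has_real_derivative Zj a b (Suc j) z / z) (at z)"
proof -
  obtain p where p: "a - 1 = Suc p" using assms by (cases "a - 1") auto
  obtain q where q: "b - 1 = Suc q" using assms by (cases "b - 1") auto
  have ra: "real a - 1 = real (Suc p)" using p assms by auto
  have rb: "real b - 1 = real (Suc q)" using q assms by auto
  show ?thesis
    unfolding Zj_def p q ra rb
    apply (rule derivative_eq_intros refl)+
    using assms by (simp add: field_simps)
qed

lemma Zj_identity:
  fixes a b :: nat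
  assumes "1 \<le> a" "1 \<le> b"
  shows "Zj a b 2 z - real (a + b - 2) * Zj a b 1 z = - (real a - 1) * (real b - 1) * Zj a b 0 z"
proof -
  have "real (a + b - 2) = real a + real b - 2" using assms by auto
  then show ?thesis unfolding Zj_def by (simp add: algebra_simps power2_eq_square)
qed

lemma alg:
  fixes A B C L P G z c zm zk m :: real
  assumes "0 < z" "z < 1" "c > 0" "zm = z * zk" "zk > 0"
    "C = m * B - P * A" "G = - L * (1 - z) / z * P + 1 / (1 - z) - m"
  shows "((1 / (1-z)^2 * A + z / (1 - z) * (B / z) + (- 1 / (1 - z)) * B + L * (C / z)) * (c * zm)
      - (z / (1 - z) * A + L * B) * (c * (m * zk))) / (c * zm) ^ 2
    = A * G / ((1 - z) * c * zm)"
proof -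
  define w where "w = 1 - z"
  have z: "z = 1 - w" using w_def by simp
  have "w \<noteq> 0" "z \<noteq> 0" "zk \<noteq> 0" "c \<noteq> 0" using assms w_def by auto
  have e1: "z / (1 - z) * (B / z) + (- 1 / (1 - z)) * B = 0" using \<open>z \<noteq> 0\<close> by simp
  have "((1 / (1-z)^2 * A + z / (1 - z) * (B / z) + (- 1 / (1 - z)) * B + L * (C / z)) * (c * zm)
      - (z / (1 - z) * A + L * B) * (c * (m * zk))) / (c * zm) ^ 2
     = ((A / w^2 + L * (C / z)) * (c * (z*zk))
      - (z / w * A + L * B) * (c * (m * zk))) / (c * (z*zk)) ^ 2"
    unfolding assms(4) w_def[symmetric] using e1[unfolded w_def[symmetric]] by (simp add: algebra_simps)
  also have "\<dots> = A * (z / w^2 - m * z / w - L * P) / (c * z^2 * zk)"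
    using \<open>w \<noteq> 0\<close> \<open>z \<noteq> 0\<close> \<open>zk \<noteq> 0\<close> \<open>c \<noteq> 0\<close> unfolding assms(6)
    by (simp add: field_simps power2_eq_square)
  also have "\<dots> = A * G / ((1 - z) * c * zm)"
    using \<open>w \<noteq> 0\<close> \<open>z \<noteq> 0\<close> \<open>zk \<noteq> 0\<close> \<open>c \<noteq> 0\<close> unfolding assms(4,7) w_def[symmetric]
    by (simp add: field_simps power2_eq_square)
  finally show ?thesis .
qed
lemma T_deriv:
  fixes a b :: nat
  assumes "3 \<le> a" "a < b" "0 < z" "z < 1"
  shows "(Ttilde a b has_real_derivative
     Zj a b 0 z * gF a b z / ((1 - z) * (real a * real b * (real b - real a)) * z ^ (a + b - 2))) (at z)"
proof -
  define c where "c = real a * real b * (real b - real a)"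
  define m where "m = a + b - 2"
  have c: "c > 0" using assms unfolding c_def by auto
  obtain k where k: "m = Suc k" using assms unfolding m_def by (cases "a + b - 2") auto
  have T: "Ttilde a b = (\<lambda>z. (z / (1 - z) * Zj a b 0 z + ln (1 - z) * Zj a b 1 z) / (c * z ^ m))"
    unfolding Ttilde_def c_def m_def by auto
  have d0: "((\<lambda>z. Zj a b 0 z) has_real_derivative Zj a b 1 z / z) (at z)"
    using Zj_deriv[of a b z 0] assms by auto
  have d1: "((\<lambda>z. Zj a b 1 z) has_real_derivative Zj a b 2 z / z) (at z)"
    using Zj_deriv[of a b z 1] assms by (auto simp: numeral_2_eq_2)
  have id: "Zj a b 2 z = real m * Zj a b 1 z - (real a - 1) * (real b - 1) * Zj a b 0 z"
    using Zj_identity[of a b z] assms unfolding m_def by (simp add: algebra_simps)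
  have zk: "z ^ m = z * z ^ k" using k by simp
  have d1z: "((\<lambda>z. 1 - z) has_real_derivative 0 - 1) (at z)"
    by (rule DERIV_diff[OF DERIV_const DERIV_ident])
  have dq: "((\<lambda>z. z / (1 - z)) has_real_derivative 1 / (1 - z)^2) (at z)"
    using DERIV_divide[OF DERIV_ident d1z] assms by (simp add: power2_eq_square)
  have dl: "((\<lambda>z. ln (1 - z)) has_real_derivative - 1 / (1 - z)) (at z)"
    using DERIV_chain2[OF DERIV_ln_divide d1z] assms by simp
  have dN: "((\<lambda>z. z / (1 - z) * Zj a b 0 z + ln (1 - z) * Zj a b 1 z) has_real_derivative
     (1 / (1-z)^2 * Zj a b 0 z + z / (1 - z) * (Zj a b 1 z / z) + (- 1 / (1 - z)) * Zj a b 1 z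
        + ln (1 - z) * (Zj a b 2 z / z))) (at z)"
    using DERIV_add[OF DERIV_mult[OF dq d0] DERIV_mult[OF dl d1]] by (simp only: add.assoc mult.commute)
  have dD: "((\<lambda>z. c * z ^ m) has_real_derivative c * (real m * z ^ k)) (at z)"
    using DERIV_cmult[OF DERIV_pow[of m z], of c] k by simp
  have "((\<lambda>z. (z / (1 - z) * Zj a b 0 z + ln (1 - z) * Zj a b 1 z) / (c * z ^ m)) has_real_derivative
     ((1 / (1-z)^2 * Zj a b 0 z + z / (1 - z) * (Zj a b 1 z / z) + (- 1 / (1 - z)) * Zj a b 1 z
        + ln (1 - z) * (Zj a b 2 z / z)) * (c * z ^ m)
      - (z / (1 - z) * Zj a b 0 z + ln (1 - z) * Zj a b 1 z) * (c * (real m * z ^ k)))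
      / (c * z ^ m) ^ 2) (at z)"
    using DERIV_divide[OF dN dD] c assms by (simp add: power2_eq_square)
  moreover have "((1 / (1-z)^2 * Zj a b 0 z + z / (1 - z) * (Zj a b 1 z / z) + (- 1 / (1 - z)) * Zj a b 1 z
        + ln (1 - z) * (Zj a b 2 z / z)) * (c * z ^ m)
      - (z / (1 - z) * Zj a b 0 z + ln (1 - z) * Zj a b 1 z) * (c * (real m * z ^ k)))
      / (c * z ^ m) ^ 2 = Zj a b 0 z * gF a b z / ((1 - z) * c * z ^ m)"
  proof (rule alg[where P="(real a - 1)*(real b - 1)"])
    have rm: "real m = real a + real b - 2" using assms unfolding m_def by auto
    show "gF a b z = - ln (1 - z) * (1 - z) / z * ((real a - 1) * (real b - 1)) + 1 / (1 - z) - real m"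
      unfolding gF_def fF_def rm by (simp add: algebra_simps)
  qed (use assms c zk id in auto)
  ultimately show ?thesis unfolding T by (simp add: c_def m_def mult.assoc)
qed

lemma s1: "(D::real) > 0 \<Longrightarrow> Z > 0 \<Longrightarrow> (0 < Z * g / D) = (0 < g)"
  by (simp add: zero_less_divide_iff zero_less_mult_iff)
lemma s2: "(D::real) > 0 \<Longrightarrow> Z < 0 \<Longrightarrow> (Z * g / D < 0) = (0 < g)"
  by (simp add: divide_less_0_iff mult_less_0_iff)

lemma Z0_form:
  fixes a b :: nat
  assumes "1 \<le> a" "a < b"
  shows "Zj a b 0 z = z ^ (a - 1) * (real a - real b * z ^ (b - a))"
proof -
  have "b - 1 = (a - 1) + (b - a)" using assms by auto
  then show ?thesis unfolding Zj_def by (simp add: power_add algebra_simps)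
qed

lemma zprime_pow:
  fixes a b :: nat
  assumes "1 \<le> a" "a < b"
  shows "zprime a b ^ (b - a) = real a / real b" "zprime a b > 0"
proof -
  have pos: "real a / real b > 0" using assms by auto
  have e: "real b - real a = real (b - a)" using assms by auto
  have zp: "zprime a b > 0" using pos assms unfolding zprime_def by simp
  have "zprime a b ^ (b - a) = zprime a b powr real (b - a)"
    using zp by (simp add: powr_realpow)
  also have "\<dots> = real a / real b"
    unfolding zprime_def e powr_powr using assms by simp
  finally show "zprime a b ^ (b - a) = real a / real b" .
  show "zprime a b > 0" by (rule zp)
qed

theorem mainTheorem9:
  fixes a b :: nat
  assumes "3 \<le> a" and "a < b"
  shows "(\<forall>z. 0 < z \<and> z < zprime a b \<longrightarrow> (deriv (Ttilde a b) z > 0 \<longleftrightarrow> gF a b z > 0))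
       \<and> (\<forall>z. zprime a b < z \<and> z < 1 \<longrightarrow> (deriv (Ttilde a b) z < 0 \<longleftrightarrow> gF a b z > 0))"
proof -
  have a1: "1 \<le> a" using assms by auto
  obtain w where w: "w = zprime a b" by simp
  have wp: "w ^ (b - a) = real a / real b" "w > 0" using zprime_pow[OF a1 assms(2)] w by auto
  have bpos: "real b > 0" using assms by auto
  have w1: "w < 1"
  proof (rule ccontr)
    assume "\<not> w < 1"
    then have "1 \<le> w ^ (b - a)" by (simp add: one_le_power)
    then show False using wp assms bpos by (simp add: field_simps)
  qed
  have cpos: "real a * real b * (real b - real a) > 0" using assms by auto
  have key: "deriv (Ttilde a b) z = Zj a b 0 z * gF a b z / ((1 - z) * (real a * real b * (real b - real a)) * z ^ (a + b - 2))"
    if "0 < z" "z < 1" for z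
    using DERIV_imp_deriv[OF T_deriv[OF assms that]] .
  have den: "(1 - z) * (real a * real b * (real b - real a)) * z ^ (a + b - 2) > 0"
    if "0 < z" "z < 1" for z using that cpos by simp
  show ?thesis
  proof (intro conjI allI impI)
    fix z assume z: "0 < z \<and> z < zprime a b"
    then have z1: "z < 1" using w w1 by auto
    have "z ^ (b - a) < w ^ (b - a)" using z w assms by (intro power_strict_mono) auto
    then have "real b * z ^ (b - a) < real a" using wp bpos by (simp add: field_simps)
    then have Zp: "Zj a b 0 z > 0" unfolding Z0_form[OF a1 assms(2)] using z by simp
    show "deriv (Ttilde a b) z > 0 \<longleftrightarrow> gF a b z > 0"
      unfolding key[OF conjunct1[OF z] z1]
      by (rule s1[OF den[OF conjunct1[OF z] z1] Zp])
  next
    fix z assume z: "zprime a b < z \<and> z < 1"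
    then have z0: "0 < z" using w wp by auto
    have "w ^ (b - a) < z ^ (b - a)" using z w wp assms by (intro power_strict_mono) auto
    then have "real b * z ^ (b - a) > real a" using wp bpos by (simp add: field_simps)
    then have Zn: "Zj a b 0 z < 0" unfolding Z0_form[OF a1 assms(2)] using z0
      by (simp add: mult_pos_neg)
    show "deriv (Ttilde a b) z < 0 \<longleftrightarrow> gF a b z > 0"
      unfolding key[OF z0 conjunct2[OF z]]
      by (rule s2[OF den[OF z0 conjunct2[OF z]] Zn])
  qed
qed

end
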